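(* Let $P$ be a finite non-abelian exponent-critical $p$-group. Then $P=\langle a,b\rangle$ for some $a,b\in P$ with $a$ of maximal order in $P$ (i.e. of order $\exp(P)$). Moreover, $P$ is solvable of derived length $2$.
   Context: A finite group $G$ is exponent-critical if $\exp(G)$ is not the least common multiple of the exponents of the proper non-abelian subgroups of $G$. *)

theory Defs
  imports "HOL-Algebra.Algebra"
begin

definition group_exponent :: "('a, 'b) monoid_scheme \<Rightarrow> 'a set \<Rightarrow> nat" where
  "group_exponent G H = Lcm ((group.ord G) ` H)"

definition exponent_critical :: "('a, 'b) monoid_scheme \<Rightarrow> bool" where
  "exponent_critical G \<longleftrightarrow>
     group_exponent G (carrier G) \<noteq>
     Lcm {group_exponent G H | H. subgroup H G \<and> H \<noteq> carrier G
                                 \<and> \<not> comm_group (G\<lparr>carrier := H\<rparr>)}"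

definition p_group :: "nat \<Rightarrow> ('a, 'b) monoid_scheme \<Rightarrow> bool" where
  "p_group p G \<longleftrightarrow> group G \<and> finite (carrier G) \<and> Factorial_Ring.prime p
                    \<and> (\<exists>n. card (carrier G) = p ^ n)"

definition derived_length_two :: "('a, 'b) monoid_scheme \<Rightarrow> bool" where
  "derived_length_two G \<longleftrightarrow>
     derived G (carrier G) \<noteq> {\<one>\<^bsub>G\<^esub>} \<and>
     derived G (derived G (carrier G)) = {\<one>\<^bsub>G\<^esub>}"

end

theory Submission imports Defs begin
lemma (in group_action) orbit_eq_of_mem:
  assumes "x \<in> E" "y \<in> E" "y \<in> orbit G \<phi> x"
  shows "orbit G \<phi> y = orbit G \<phi> x"
proof
  show "orbit G \<phi> y \<subseteq> orbit G \<phi> x"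
  proof
    fix z assume z: "z \<in> orbit G \<phi> y"
    have "z \<in> E" using z assms(2) element_image unfolding orbit_def by blast
    then show "z \<in> orbit G \<phi> x" using orbit_trans assms z by blast
  qed
next
  show "orbit G \<phi> x \<subseteq> orbit G \<phi> y"
  proof
    fix z assume z: "z \<in> orbit G \<phi> x"
    have "z \<in> E" using z assms(1) element_image unfolding orbit_def by blast
    then show "z \<in> orbit G \<phi> y" using orbit_trans orbit_sym assms z by blast
  qed
qed

lemma (in group_action) p_fixed_points:
  assumes fin: "finite E" and AE: "A \<subseteq> E"
    and inv: "\<And>g T. g \<in> carrier G \<Longrightarrow> T \<in> A \<Longrightarrow> \<phi> g T \<in> A"
    and pr: "Factorial_Ring.prime (p::nat)" and ord: "card (carrier G) = p ^ m"
    and pA: "p dvd card A"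
  shows "p dvd card {T\<in>A. \<forall>g\<in>carrier G. \<phi> g T = T}"
proof -
  interpret G: group G using group_hom group_hom.axioms(1) by auto
  define F where "F = {T\<in>A. \<forall>g\<in>carrier G. \<phi> g T = T}"
  have finA: "finite A" using fin AE finite_subset by blast
  have orbA: "orbit G \<phi> T \<subseteq> A" if "T \<in> A" for T
    using inv that unfolding orbit_def by blast
  have orbF: "orbit G \<phi> T = {T}" if "T \<in> F" for T
  proof -
    have fx: "\<forall>g\<in>carrier G. \<phi> g T = T" using that unfolding F_def by blast
    have "\<one> \<in> carrier G" by simp
    thus ?thesis unfolding orbit_def using fx by force
  qed
  have orb_dvd: "p dvd card (orbit G \<phi> T)" if T: "T \<in> A - F" for T
  proof -
    have XE: "T \<in> E" using T AE by blast
    have "card (orbit G \<phi> T) * card (stabilizer G \<phi> T) = order G"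
      using orbit_stabilizer_theorem XE by blast
    hence "card (orbit G \<phi> T) dvd p ^ m" using ord unfolding order_def
      by (metis dvd_triv_left)
    then obtain j where j: "card (orbit G \<phi> T) = p ^ j"
      using divides_primepow_nat[OF pr] by blast
    have "j \<noteq> 0"
    proof
      assume "j = 0"
      hence c1: "card (orbit G \<phi> T) = 1" using j by simp
      have "T \<in> orbit G \<phi> T" using orbit_refl XE .
      hence oX: "orbit G \<phi> T = {T}" using c1 by (metis card_1_singletonE singletonD)
      have "\<forall>g\<in>carrier G. \<phi> g T = T"
      proof
        fix g assume "g \<in> carrier G"
        hence "\<phi> g T \<in> orbit G \<phi> T" unfolding orbit_def by blast
        thus "\<phi> g T = T" using oX by blast
      qed
      thus False using T unfolding F_def by blast
    qed
    thus ?thesis using j pr by (simp add: prime_gt_1_nat)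
  qed
  have un: "\<Union> ((\<lambda>T. orbit G \<phi> T) ` (A - F)) = A - F"
  proof
    show "\<Union> ((\<lambda>T. orbit G \<phi> T) ` (A - F)) \<subseteq> A - F"
    proof clarify
      fix T Y assume T: "T \<in> A" "T \<notin> F" and Y: "Y \<in> orbit G \<phi> T"
      have YA: "Y \<in> A" using orbA T Y by blast
      show "Y \<in> A - F"
      proof (rule ccontr)
        assume "Y \<notin> A - F"
        hence "Y \<in> F" using YA by blast
        hence "orbit G \<phi> Y = {Y}" using orbF by blast
        moreover have "orbit G \<phi> Y = orbit G \<phi> T"
          using orbit_eq_of_mem T Y YA AE by blast
        moreover have "T \<in> orbit G \<phi> T" using orbit_refl T AE by blast
        ultimately have "T = Y" by blast
        thus False using T \<open>Y \<in> F\<close> by blast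
      qed
    qed
  next
    show "A - F \<subseteq> \<Union> ((\<lambda>T. orbit G \<phi> T) ` (A - F))"
      using orbit_refl AE by blast
  qed
  have disj: "pairwise disjnt ((\<lambda>T. orbit G \<phi> T) ` (A - F))"
  proof (rule pairwiseI)
    fix B1 B2 assume B1: "B1 \<in> (\<lambda>T. orbit G \<phi> T) ` (A - F)" and B2: "B2 \<in> (\<lambda>T. orbit G \<phi> T) ` (A - F)"
      and ne: "B1 \<noteq> B2"
    obtain T1 where T1: "T1 \<in> A - F" "B1 = orbit G \<phi> T1" using B1 by blast
    obtain T2 where T2: "T2 \<in> A - F" "B2 = orbit G \<phi> T2" using B2 by blast
    show "disjnt B1 B2"
    proof (rule ccontr)
      assume "\<not> disjnt B1 B2"
      then obtain Z where Z: "Z \<in> B1" "Z \<in> B2" unfolding disjnt_def by blast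
      have ZE: "Z \<in> E" using Z T1 orbA AE by blast
      have "orbit G \<phi> Z = B1" using orbit_eq_of_mem T1 Z ZE AE by blast
      moreover have "orbit G \<phi> Z = B2" using orbit_eq_of_mem T2 Z ZE AE by blast
      ultimately show False using ne by blast
    qed
  qed
  have fin_orb: "finite B" if "B \<in> (\<lambda>T. orbit G \<phi> T) ` (A - F)" for B
    using that orbA finA finite_subset by blast
  have "card (A - F) = sum card ((\<lambda>T. orbit G \<phi> T) ` (A - F))"
    using card_Union_disjoint[OF disj fin_orb] un by simp
  hence pAF: "p dvd card (A - F)"
    using orb_dvd by (metis (no_types, lifting) dvd_sum imageE)
  have "F \<subseteq> A" unfolding F_def by blast
  hence "card A = card F + card (A - F)"
    by (metis card_Diff_subset finA finite_subset card_mono le_add_diff_inverse)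
  hence "p dvd card F" using pA pAF by (metis dvd_add_left_iff)
  thus ?thesis unfolding F_def .
qed


lemma (in group) lcos_subgroup_self:
  assumes "subgroup H G" "h \<in> H" shows "h <# H = H"
proof
  show "h <# H \<subseteq> H" unfolding l_coset_def using assms subgroup.m_closed by fastforce
next
  show "H \<subseteq> h <# H"
  proof
    fix y assume y: "y \<in> H"
    have hc: "h \<in> carrier G" "y \<in> carrier G" using assms y subgroup.subset by auto
    have "inv h \<otimes> y \<in> H" using assms y subgroup.m_closed subgroup.m_inv_closed by metis
    moreover have "y = h \<otimes> (inv h \<otimes> y)" using hc by (simp add: m_assoc[symmetric])
    ultimately show "y \<in> h <# H" unfolding l_coset_def by blast
  qed
qed

lemma (in group) lcos_rcos_assoc':
  assumes "S \<subseteq> carrier G" "h \<in> carrier G" "x \<in> carrier G"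
  shows "h <# (S #> x) = (h <# S) #> x"
  unfolding l_coset_def r_coset_def using assms by (auto simp: m_assoc subset_iff)

lemma (in group) normalizer_grows:
  assumes fin: "finite (carrier G)" and pr: "Factorial_Ring.prime (p::nat)"
    and ordG: "card (carrier G) = p ^ n"
    and M: "subgroup M G" and ne: "M \<noteq> carrier G"
  shows "\<exists>x\<in>carrier G. x \<notin> M \<and> (\<forall>h\<in>M. x \<otimes> h \<otimes> inv x \<in> M)"
proof -
  let ?E = "{H. H \<subseteq> carrier G}"
  let ?\<phi> = "\<lambda>g. \<lambda>H \<in> ?E. g <# H #> inv g"
  interpret A: group_action "G\<lparr>carrier := M\<rparr>" ?E ?\<phi>
    using group_action.induced_action[OF action_by_conjugation_on_power_set M] .
  have Msub: "M \<subseteq> carrier G" using M subgroup.subset by blast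
  have finE: "finite ?E" using fin by simp
  have RE: "rcosets M \<subseteq> ?E" using rcosets_subset_PowG[OF M] by auto
  have act: "?\<phi> h (M #> x) = M #> (x \<otimes> inv h)" if h: "h \<in> M" and x: "x \<in> carrier G" for h x
  proof -
    have hc: "h \<in> carrier G" using h Msub by blast
    have "M #> x \<in> ?E" using RE rcosetsI[OF Msub x] by blast
    hence "?\<phi> h (M #> x) = h <# (M #> x) #> inv h" by simp
    also have "\<dots> = (h <# M) #> x #> inv h" using lcos_rcos_assoc'[OF Msub hc x] by simp
    also have "\<dots> = M #> x #> inv h" using lcos_subgroup_self[OF M h] by simp
    also have "\<dots> = M #> (x \<otimes> inv h)" using coset_mult_assoc[OF Msub x] hc by simp
    finally show ?thesis .
  qed
  have inv_ok: "\<And>g T. g \<in> carrier (G\<lparr>carrier := M\<rparr>) \<Longrightarrow> T \<in> rcosets M \<Longrightarrow> ?\<phi> g T \<in> rcosets M"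
  proof -
    fix g T assume g: "g \<in> carrier (G\<lparr>carrier := M\<rparr>)" and T: "T \<in> rcosets M"
    obtain x where x: "x \<in> carrier G" "T = M #> x" using T unfolding RCOSETS_def by blast
    have "g \<in> M" using g by simp
    hence "?\<phi> g T = M #> (x \<otimes> inv g)" using act x by blast
    moreover have "x \<otimes> inv g \<in> carrier G" using x \<open>g \<in> M\<close> Msub by blast
    ultimately show "?\<phi> g T \<in> rcosets M" using rcosetsI[OF Msub] by simp
  qed
  have lag: "card (rcosets M) * card M = p ^ n" using lagrange[OF M] ordG unfolding order_def by simp
  hence "card M dvd p ^ n" by (metis dvd_triv_right)
  then obtain i where i: "card M = p ^ i" using divides_primepow_nat[OF pr] by blast
  have "card (rcosets M) dvd p ^ n" using lag by (metis dvd_triv_left)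
  then obtain k where k: "card (rcosets M) = p ^ k" using divides_primepow_nat[OF pr] by blast
  have "k \<noteq> 0"
  proof
    assume "k = 0"
    hence "card M = card (carrier G)" using lag k ordG by simp
    hence "M = carrier G" using card_subset_eq[OF fin Msub] by simp
    thus False using ne by simp
  qed
  hence pR: "p dvd card (rcosets M)" using k by simp
  have cM: "card (carrier (G\<lparr>carrier := M\<rparr>)) = p ^ i" using i by simp
  define F where "F = {T \<in> rcosets M. \<forall>g\<in>carrier (G\<lparr>carrier := M\<rparr>). ?\<phi> g T = T}"
  have pF: "p dvd card F"
    unfolding F_def
    apply (rule A.p_fixed_points[OF finE RE _ pr cM pR])
     apply (rule inv_ok)
      apply assumption+
    done
  have MF: "M \<in> F"
  proof -
    have "M = M #> \<one>" using Msub by simp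
    hence "M \<in> rcosets M" using rcosetsI[OF Msub one_closed] by simp
    moreover have "?\<phi> g M = M" if g: "g \<in> M" for g
    proof -
      have e1: "?\<phi> g (M #> \<one>) = M #> (\<one> \<otimes> inv g)" using act[OF g one_closed] .
      have gc: "g \<in> carrier G" using g Msub by blast
      have ig: "inv g \<in> M" using subgroup.m_inv_closed[OF M g] .
      have "M #> inv g = M" using subgroup.rcos_const[OF M is_group ig] .
      moreover have "\<one> \<otimes> inv g = inv g" using gc by simp
      moreover have "M #> \<one> = M" using Msub by simp
      ultimately show ?thesis using e1 by simp
    qed
    ultimately show ?thesis unfolding F_def by simp
  qed
  have FR: "F \<subseteq> rcosets M" unfolding F_def by blast
  have finF: "finite F" using finite_subset[OF FR] finite_subset[OF RE finE] by blast
  have "card F \<noteq> 0" using card_0_eq[OF finF] MF by blast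
  moreover have "p \<ge> 2" using pr by (simp add: prime_ge_2_nat)
  moreover have "p \<le> card F" using dvd_imp_le[OF pF] \<open>card F \<noteq> 0\<close> by simp
  ultimately have c2: "card F \<ge> 2" by simp
  have "\<exists>T\<in>F. T \<noteq> M"
  proof (rule ccontr)
    assume "\<not> (\<exists>T\<in>F. T \<noteq> M)" hence "F \<subseteq> {M}" by blast
    hence "card F \<le> 1" using card_mono[of "{M}" F] by simp
    thus False using c2 by simp
  qed
  then obtain T where TF: "T \<in> F" and TM: "T \<noteq> M" by blast
  have "T \<in> rcosets M" using TF unfolding F_def by blast
  then obtain x where x: "x \<in> carrier G" "T = M #> x" unfolding RCOSETS_def by blast
  have xM: "x \<notin> M"
  proof
    assume "x \<in> M" hence "M #> x = M" using subgroup.rcos_const[OF M is_group] by blast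
    thus False using TM x by simp
  qed
  have "\<forall>h\<in>M. x \<otimes> h \<otimes> inv x \<in> M"
  proof
    fix h assume h: "h \<in> M"
    have ih: "inv h \<in> M" using subgroup.m_inv_closed[OF M h] .
    have hc: "h \<in> carrier G" using h Msub by blast
    have "?\<phi> (inv h) T = T" using TF ih unfolding F_def by simp
    hence eq: "M #> (x \<otimes> h) = M #> x" using act[OF ih x(1)] x hc by simp
    have "x \<otimes> h \<in> M #> (x \<otimes> h)" using rcos_self[OF _ M] x hc by simp
    hence "x \<otimes> h \<in> M #> x" using eq by simp
    then obtain m where m: "m \<in> M" "x \<otimes> h = m \<otimes> x" unfolding r_coset_def by blast
    have mc: "m \<in> carrier G" using m Msub by blast
    have "x \<otimes> h \<otimes> inv x = m \<otimes> x \<otimes> inv x" using m by simp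
    also have "\<dots> = m" using mc x by (simp add: m_assoc)
    finally show "x \<otimes> h \<otimes> inv x \<in> M" using m by simp
  qed
  thus ?thesis using x xM by blast
qed


lemma (in group) inv_cancel_left':
  "x \<in> carrier G \<Longrightarrow> y \<in> carrier G \<Longrightarrow> inv x \<otimes> (x \<otimes> y) = y"
  by (simp add: m_assoc[symmetric])

lemma (in group) inv_cancel_left'':
  "x \<in> carrier G \<Longrightarrow> y \<in> carrier G \<Longrightarrow> x \<otimes> (inv x \<otimes> y) = y"
  by (simp add: m_assoc[symmetric])

lemma (in group) conj_inv_closed:
  assumes fin: "finite M" and Msub: "M \<subseteq> carrier G" and g: "g \<in> carrier G"
    and cl: "\<forall>h\<in>M. g \<otimes> h \<otimes> inv g \<in> M"
  shows "\<forall>h\<in>M. inv g \<otimes> h \<otimes> g \<in> M"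
proof
  fix h assume h: "h \<in> M"
  define f where "f = (\<lambda>h. g \<otimes> h \<otimes> inv g)"
  have inj: "inj_on f M"
  proof (rule inj_onI)
    fix u v assume u: "u \<in> M" and v: "v \<in> M" and e: "f u = f v"
    have uc: "u \<in> carrier G" and vc: "v \<in> carrier G" using u v Msub by auto
    have "g \<otimes> u \<otimes> inv g = g \<otimes> v \<otimes> inv g" using e unfolding f_def .
    hence "g \<otimes> u = g \<otimes> v" using uc vc g by (metis m_closed inv_closed r_cancel)
    thus "u = v" using uc vc g by simp
  qed
  have sub: "f ` M \<subseteq> M" using cl unfolding f_def by blast
  have "card (f ` M) = card M" using card_image[OF inj] .
  hence "f ` M = M" using card_subset_eq[OF fin sub] by simp
  hence "h \<in> f ` M" using h by simp
  then obtain h' where h': "h' \<in> M" "h = g \<otimes> h' \<otimes> inv g" unfolding f_def by blast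
  have hc': "h' \<in> carrier G" using h' Msub by auto
  have "inv g \<otimes> h \<otimes> g = h'" using h' hc' g by (simp add: m_assoc) (simp add: m_assoc[symmetric])
  thus "inv g \<otimes> h \<otimes> g \<in> M" using h' by simp
qed

lemma (in group) commutator_one_iff:
  assumes "u \<in> carrier G" "v \<in> carrier G"
  shows "u \<otimes> v \<otimes> inv u \<otimes> inv v = \<one> \<longleftrightarrow> u \<otimes> v = v \<otimes> u"
proof
  assume c: "u \<otimes> v \<otimes> inv u \<otimes> inv v = \<one>"
  have "(u \<otimes> v \<otimes> inv u \<otimes> inv v) \<otimes> (v \<otimes> u) = u \<otimes> v" using assms by (simp add: m_assoc inv_cancel_left' inv_cancel_left'')
  thus "u \<otimes> v = v \<otimes> u" using c assms by simp
next
  assume c: "u \<otimes> v = v \<otimes> u"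
  have "u \<otimes> v \<otimes> inv u \<otimes> inv v = v \<otimes> u \<otimes> inv u \<otimes> inv v" using c by simp
  also have "\<dots> = v \<otimes> (u \<otimes> inv u) \<otimes> inv v" using assms by (simp add: m_assoc)
  also have "\<dots> = \<one>" using assms by simp
  finally show "u \<otimes> v \<otimes> inv u \<otimes> inv v = \<one>" .
qed

theorem mainTheorem11:
  fixes P (structure) and p :: nat
  assumes "p_group p P"
    and "\<not> comm_group P"
    and "exponent_critical P"
  shows "(\<exists>a\<in>carrier P. \<exists>b\<in>carrier P.
            generate P {a, b} = carrier P \<and>
            group.ord P a = group_exponent P (carrier P))
         \<and> solvable P \<and> derived_length_two P"
proof -
  have gP: "group P" and finP: "finite (carrier P)" and pr: "Factorial_Ring.prime p"
    and exn: "\<exists>n. card (carrier P) = p ^ n"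
    using assms(1) unfolding p_group_def by auto
  then obtain n where cardP: "card (carrier P) = p ^ n" by blast
  interpret group P by (rule gP)
  define e where "e = group_exponent P (carrier P)"
  have p1: "p > 1" using pr prime_gt_1_nat by blast
  have ordpow: "\<exists>i. ord x = p ^ i" if x: "x \<in> carrier P" for x
  proof -
    have "ord x dvd p ^ n" using ord_dvd_group_order[OF x] cardP unfolding order_def by simp
    thus ?thesis using divides_primepow_nat[OF pr] by blast
  qed
  have finO: "finite (ord ` carrier P)" using finP by simp
  have neO: "ord ` carrier P \<noteq> {}" using one_closed by blast
  obtain a0 where a0: "a0 \<in> carrier P" "ord a0 = Max (ord ` carrier P)"
    using Max_in[OF finO neO] by auto
  have dvd_a0: "ord x dvd ord a0" if x: "x \<in> carrier P" for x
  proof -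
    obtain i where i: "ord x = p ^ i" using ordpow[OF x] by blast
    obtain j where j: "ord a0 = p ^ j" using ordpow[OF a0(1)] by blast
    have "ord x \<le> ord a0" using a0(2) Max_ge[OF finO] x by simp
    hence "i \<le> j" using i j p1 power_le_imp_le_exp by metis
    thus ?thesis using i j le_imp_power_dvd by simp
  qed
  have e_eq: "e = ord a0"
  proof (rule dvd_antisym)
    show "e dvd ord a0" unfolding e_def group_exponent_def
      by (rule Lcm_least) (use dvd_a0 in blast)
    show "ord a0 dvd e" unfolding e_def group_exponent_def
      by (rule dvd_Lcm) (use a0 in blast)
  qed
  have all_dvd: "ord x dvd e" if "x \<in> carrier P" for x using dvd_a0 that e_eq by simp
  have expH_dvd: "group_exponent P H dvd e" if "H \<subseteq> carrier P" for H
    unfolding group_exponent_def using that all_dvd by (intro Lcm_least) blast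
  have expH: "group_exponent P H = e" if "H \<subseteq> carrier P" "y \<in> H" "ord y = e" for H y
  proof (rule dvd_antisym)
    show "group_exponent P H dvd e" using expH_dvd[OF that(1)] .
    show "e dvd group_exponent P H" unfolding group_exponent_def using that
      by (metis dvd_Lcm image_eqI)
  qed
  have crit: "\<forall>u\<in>H. \<forall>v\<in>H. u \<otimes> v = v \<otimes> u"
    if H: "subgroup H P" "H \<noteq> carrier P" "y \<in> H" "ord y = e" for H y
  proof (rule ccontr)
    assume nc: "\<not> (\<forall>u\<in>H. \<forall>v\<in>H. u \<otimes> v = v \<otimes> u)"
    have Hsub: "H \<subseteq> carrier P" using subgroup.subset[OF H(1)] .
    have "\<not> comm_group (P\<lparr>carrier := H\<rparr>)"
    proof
      assume cg: "comm_group (P\<lparr>carrier := H\<rparr>)"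
      have "\<forall>u\<in>H. \<forall>v\<in>H. u \<otimes> v = v \<otimes> u"
      proof (intro ballI)
        fix u v assume "u \<in> H" "v \<in> H"
        moreover have cm: "comm_monoid (P\<lparr>carrier := H\<rparr>)" using cg comm_group_def by blast
        ultimately show "u \<otimes> v = v \<otimes> u" using comm_monoid.m_comm[OF cm, of u v] by simp
      qed
      thus False using nc by blast
    qed
    define S where "S = {group_exponent P H | H. subgroup H P \<and> H \<noteq> carrier P
                                 \<and> \<not> comm_group (P\<lparr>carrier := H\<rparr>)}"
    have "group_exponent P H \<in> S" unfolding S_def using H \<open>\<not> comm_group (P\<lparr>carrier := H\<rparr>)\<close> by blast
    hence "e dvd Lcm S" using expH[OF Hsub H(3,4)] by (metis dvd_Lcm)
    moreover have "Lcm S dvd e"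
    proof (rule Lcm_least)
      fix b assume "b \<in> S"
      then obtain H' where "b = group_exponent P H'" "subgroup H' P" unfolding S_def by blast
      thus "b dvd e" using expH_dvd subgroup.subset by blast
    qed
    ultimately have "e = Lcm S" by (rule dvd_antisym)
    thus False using assms(3) unfolding exponent_critical_def e_def S_def by simp
  qed
  obtain x y where xy: "x \<in> carrier P" "y \<in> carrier P" "x \<otimes> y \<noteq> y \<otimes> x"
    using assms(2) group_comm_groupI by blast
  have "\<exists>a\<in>carrier P. ord a = e \<and> (\<exists>b\<in>carrier P. a \<otimes> b \<noteq> b \<otimes> a)"
  proof (rule ccontr)
    assume "\<not> ?thesis"
    hence cen: "\<And>a b. a \<in> carrier P \<Longrightarrow> ord a = e \<Longrightarrow> b \<in> carrier P \<Longrightarrow> a \<otimes> b = b \<otimes> a" by blast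
    obtain j where j: "e = p ^ j" using ordpow[OF a0(1)] e_eq by metis
    have small: "ord z dvd p ^ (j - 1)" if z: "z \<in> carrier P" "ord z \<noteq> e" for z
    proof -
      obtain i where i: "ord z = p ^ i" using ordpow[OF z(1)] by blast
      have "p ^ i dvd p ^ j" using all_dvd[OF z(1)] i j by simp
      hence "i \<le> j" using p1 power_dvd_imp_le by blast
      moreover have "i \<noteq> j" using z(2) i j by auto
      ultimately have "i \<le> j - 1" by simp
      thus ?thesis using i le_imp_power_dvd by simp
    qed
    have ox: "ord x \<noteq> e" using cen[OF xy(1) _ xy(2)] xy(3) by blast
    have a0c: "\<And>b. b \<in> carrier P \<Longrightarrow> a0 \<otimes> b = b \<otimes> a0" using cen[OF a0(1)] e_eq by simp
    have ax: "a0 \<otimes> x \<in> carrier P" using a0(1) xy(1) by simp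
    have "a0 \<otimes> x \<otimes> y \<noteq> y \<otimes> (a0 \<otimes> x)"
    proof
      assume h: "a0 \<otimes> x \<otimes> y = y \<otimes> (a0 \<otimes> x)"
      have "a0 \<otimes> (x \<otimes> y) = a0 \<otimes> x \<otimes> y" using a0(1) xy by (simp add: m_assoc)
      also have "\<dots> = y \<otimes> a0 \<otimes> x" using h a0(1) xy by (simp add: m_assoc)
      also have "\<dots> = a0 \<otimes> y \<otimes> x" using a0c[OF xy(2)] by simp
      also have "\<dots> = a0 \<otimes> (y \<otimes> x)" using a0(1) xy by (simp add: m_assoc)
      finally have "x \<otimes> y = y \<otimes> x" using a0(1) xy by simp
      thus False using xy(3) by simp
    qed
    hence oax: "ord (a0 \<otimes> x) \<noteq> e" using cen[OF ax _ xy(2)] by blast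
    have "\<one> = (a0 \<otimes> x) [^] (p ^ (j - 1))"
      using small[OF ax oax] pow_eq_id[OF ax] by metis
    also have "\<dots> = a0 [^] (p ^ (j - 1)) \<otimes> x [^] (p ^ (j - 1))"
      using pow_mult_distrib[OF a0c[OF xy(1)] a0(1) xy(1)] .
    also have "x [^] (p ^ (j - 1)) = \<one>" using small[OF xy(1) ox] pow_eq_id[OF xy(1)] by simp
    finally have "a0 [^] (p ^ (j - 1)) = \<one>" using a0(1) by simp
    hence "p ^ j dvd p ^ (j - 1)" using pow_eq_id[OF a0(1)] e_eq j by simp
    hence "j \<le> j - 1" using p1 power_dvd_imp_le by blast
    moreover have "j \<noteq> 0"
    proof
      assume "j = 0"
      hence "ord x dvd 1" using all_dvd[OF xy(1)] j by simp
      hence "ord x = 1" by simp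
      hence "x = \<one>" using ord_eq_1 xy(1) by blast
      thus False using xy by simp
    qed
    ultimately show False by simp
  qed
  then obtain a b where a: "a \<in> carrier P" "ord a = e" and b: "b \<in> carrier P" "a \<otimes> b \<noteq> b \<otimes> a"
    by blast
  have gen: "generate P {a, b} = carrier P"
  proof (rule ccontr)
    assume ne: "generate P {a, b} \<noteq> carrier P"
    have sg: "subgroup (generate P {a, b}) P" using generate_is_subgroup a(1) b(1) by simp
    have ain: "a \<in> generate P {a, b}" and bin: "b \<in> generate P {a, b}"
      by (auto intro: generate.incl)
    show False using crit[OF sg ne ain a(2)] ain bin b(2) by blast
  qed
  define S where "S = {H. subgroup H P \<and> a \<in> H \<and> H \<noteq> carrier P}"
  have ga: "generate P {a} \<in> S"
  proof -
    have sg: "subgroup (generate P {a}) P" using generate_is_subgroup a(1) by simp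
    have ain: "a \<in> generate P {a}" by (auto intro: generate.incl)
    have "generate P {a} \<noteq> carrier P"
    proof
      assume eq: "generate P {a} = carrier P"
      hence "b \<in> generate P {a}" using b by simp
      then obtain k :: int where k: "b = a [^] k" using generate_pow[OF a(1)] by blast
      have "a \<otimes> b = a [^] (1::int) \<otimes> a [^] k" using k a(1) by simp
      also have "\<dots> = a [^] ((1::int) + k)" by (rule int_pow_mult[OF a(1), symmetric])
      also have "\<dots> = a [^] (k + (1::int))" by (simp only: add.commute)
      also have "\<dots> = a [^] k \<otimes> a [^] (1::int)" by (rule int_pow_mult[OF a(1)])
      also have "\<dots> = b \<otimes> a" using k a(1) by simp
      finally show False using b(2) by simp
    qed
    thus ?thesis unfolding S_def using sg ain by blast
  qed
  have finS: "finite S"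
  proof (rule finite_subset)
    show "S \<subseteq> Pow (carrier P)" unfolding S_def using subgroup.subset by blast
    show "finite (Pow (carrier P))" using finP by simp
  qed
  have neS: "card ` S \<noteq> {}" using ga by blast
  obtain M where MS: "M \<in> S" and Mmax: "card M = Max (card ` S)"
    using Max_in[OF finite_imageI[OF finS] neS] by auto
  have M: "subgroup M P" "a \<in> M" "M \<noteq> carrier P" using MS unfolding S_def by auto
  have Msub: "M \<subseteq> carrier P" using subgroup.subset[OF M(1)] .
  have finM: "finite M" using finite_subset[OF Msub finP] .
  have maxM: "H = carrier P" if H: "subgroup H P" "M \<subseteq> H" "H \<noteq> M" for H
  proof (rule ccontr)
    assume "H \<noteq> carrier P"
    hence "H \<in> S" unfolding S_def using H M(2) by blast
    hence "card H \<in> card ` S" by blast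
    hence "card H \<le> Max (card ` S)" by (rule Max_ge[OF finite_imageI[OF finS]])
    hence "card H \<le> card M" using Mmax by simp
    moreover have "finite H" using finite_subset[OF subgroup.subset[OF H(1)] finP] .
    moreover have "M \<subset> H" using H by blast
    ultimately show False using psubset_card_mono[of H M] by simp
  qed
  obtain x1 where x1: "x1 \<in> carrier P" "x1 \<notin> M" "\<forall>h\<in>M. x1 \<otimes> h \<otimes> inv x1 \<in> M"
    using normalizer_grows[OF finP pr cardP M(1) M(3)] by blast
  define N where "N = {g \<in> carrier P. \<forall>h\<in>M. g \<otimes> h \<otimes> inv g \<in> M}"
  have Nsg: "subgroup N P"
  proof (rule subgroupI)
    show "N \<subseteq> carrier P" unfolding N_def by blast
    have "\<one> \<in> N" unfolding N_def using Msub by auto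
    thus "N \<noteq> {}" by blast
  next
    fix g assume g: "g \<in> N"
    have gc: "g \<in> carrier P" using g unfolding N_def by blast
    have "\<forall>h\<in>M. inv g \<otimes> h \<otimes> g \<in> M"
      using conj_inv_closed[OF finM Msub gc] g unfolding N_def by blast
    thus "inv g \<in> N" unfolding N_def using gc by simp
  next
    fix g1 g2 assume g1: "g1 \<in> N" and g2: "g2 \<in> N"
    have c1: "g1 \<in> carrier P" and c2: "g2 \<in> carrier P" using g1 g2 unfolding N_def by auto
    have "\<forall>h\<in>M. g1 \<otimes> g2 \<otimes> h \<otimes> inv (g1 \<otimes> g2) \<in> M"
    proof
      fix h assume h: "h \<in> M"
      have hc: "h \<in> carrier P" using h Msub by blast
      have i2: "g2 \<otimes> h \<otimes> inv g2 \<in> M" using g2 h unfolding N_def by blast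
      hence "g1 \<otimes> (g2 \<otimes> h \<otimes> inv g2) \<otimes> inv g1 \<in> M" using g1 unfolding N_def by blast
      moreover have "g1 \<otimes> (g2 \<otimes> h \<otimes> inv g2) \<otimes> inv g1 = g1 \<otimes> g2 \<otimes> h \<otimes> inv (g1 \<otimes> g2)"
        using c1 c2 hc by (simp add: m_assoc inv_mult_group)
      ultimately show "g1 \<otimes> g2 \<otimes> h \<otimes> inv (g1 \<otimes> g2) \<in> M" by simp
    qed
    thus "g1 \<otimes> g2 \<in> N" unfolding N_def using c1 c2 by simp
  qed
  have MN: "M \<subseteq> N"
  proof
    fix m assume m: "m \<in> M"
    have "\<forall>h\<in>M. m \<otimes> h \<otimes> inv m \<in> M"
    proof
      fix h assume h: "h \<in> M"
      have "m \<otimes> h \<in> M" using subgroup.m_closed[OF M(1) m h] .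
      moreover have "inv m \<in> M" using subgroup.m_inv_closed[OF M(1) m] .
      ultimately show "m \<otimes> h \<otimes> inv m \<in> M" using subgroup.m_closed[OF M(1)] by blast
    qed
    thus "m \<in> N" unfolding N_def using m Msub by blast
  qed
  have "x1 \<in> N" unfolding N_def using x1 by blast
  hence "N \<noteq> M" using x1(2) by blast
  hence Nall: "N = carrier P" using maxM[OF Nsg MN] by simp
  have Mnormal: "M \<lhd> P"
  proof (rule normal_invI[OF M(1)])
    fix g h assume "g \<in> carrier P" "h \<in> M"
    thus "g \<otimes> h \<otimes> inv g \<in> M" using Nall unfolding N_def by blast
  qed
  have Mcomm: "\<forall>u\<in>M. \<forall>v\<in>M. u \<otimes> v = v \<otimes> u" using crit[OF M(1) M(3) M(2) a(2)] .
  interpret Mn: normal M P using Mnormal .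
  define Q where "Q = P Mod M"
  have gQ: "group Q" unfolding Q_def using Mn.factorgroup_is_group .
  interpret Q: group Q using gQ .
  have hom: "(\<lambda>g. M #> g) \<in> hom P Q" unfolding Q_def using Mn.r_coset_hom_Mod .
  interpret h: group_hom P Q "\<lambda>g. M #> g"
    using hom gQ gP by (simp add: group_hom_def group_hom_axioms_def)
  define C where "C = generate Q {M #> x1}"
  have x1Q: "M #> x1 \<in> carrier Q" using h.hom_closed[OF x1(1)] .
  have Csg: "subgroup C Q" unfolding C_def using Q.generate_is_subgroup x1Q by simp
  have Ccomm: "u \<otimes>\<^bsub>Q\<^esub> v = v \<otimes>\<^bsub>Q\<^esub> u" if uv: "u \<in> C" "v \<in> C" for u v
  proof -
    obtain i :: int where i: "u = (M #> x1) [^]\<^bsub>Q\<^esub> i" using uv(1) Q.generate_pow[OF x1Q] unfolding C_def by blast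
    obtain j :: int where j: "v = (M #> x1) [^]\<^bsub>Q\<^esub> j" using uv(2) Q.generate_pow[OF x1Q] unfolding C_def by blast
    have "(M #> x1) [^]\<^bsub>Q\<^esub> i \<otimes>\<^bsub>Q\<^esub> (M #> x1) [^]\<^bsub>Q\<^esub> j = (M #> x1) [^]\<^bsub>Q\<^esub> (i + j)"
      by (rule Q.int_pow_mult[OF x1Q, symmetric])
    also have "\<dots> = (M #> x1) [^]\<^bsub>Q\<^esub> (j + i)" by (simp only: add.commute)
    also have "\<dots> = (M #> x1) [^]\<^bsub>Q\<^esub> j \<otimes>\<^bsub>Q\<^esub> (M #> x1) [^]\<^bsub>Q\<^esub> i"
      by (rule Q.int_pow_mult[OF x1Q])
    finally show ?thesis unfolding i j .
  qed
  define K where "K = {g \<in> carrier P. M #> g \<in> C}"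
  have Ksg: "subgroup K P"
  proof (rule subgroupI)
    show "K \<subseteq> carrier P" unfolding K_def by blast
    have "M #> \<one> \<in> C" using h.hom_one subgroup.one_closed[OF Csg] by simp
    thus "K \<noteq> {}" unfolding K_def by blast
  next
    fix g assume g: "g \<in> K"
    have gc: "g \<in> carrier P" and gC: "M #> g \<in> C" using g unfolding K_def by auto
    have "M #> inv g = inv\<^bsub>Q\<^esub> (M #> g)" using h.hom_inv[OF gc] .
    hence "M #> inv g \<in> C" using subgroup.m_inv_closed[OF Csg gC] by simp
    thus "inv g \<in> K" unfolding K_def using gc by simp
  next
    fix g1 g2 assume g1: "g1 \<in> K" and g2: "g2 \<in> K"
    have c: "g1 \<in> carrier P" "g2 \<in> carrier P" "M #> g1 \<in> C" "M #> g2 \<in> C"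
      using g1 g2 unfolding K_def by auto
    have "M #> (g1 \<otimes> g2) = (M #> g1) \<otimes>\<^bsub>Q\<^esub> (M #> g2)" using h.hom_mult[OF c(1,2)] .
    hence "M #> (g1 \<otimes> g2) \<in> C" using subgroup.m_closed[OF Csg c(3,4)] by simp
    thus "g1 \<otimes> g2 \<in> K" unfolding K_def using c by simp
  qed
  have MK: "M \<subseteq> K"
  proof
    fix m assume m: "m \<in> M"
    have "M #> m = M" using Mn.rcos_const[OF gP m] .
    moreover have "M = \<one>\<^bsub>Q\<^esub>" unfolding Q_def by simp
    ultimately have "M #> m \<in> C" using subgroup.one_closed[OF Csg] by simp
    thus "m \<in> K" unfolding K_def using m Msub by blast
  qed
  have "x1 \<in> K" unfolding K_def C_def using x1(1) by (auto intro: generate.incl)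
  hence "K \<noteq> M" using x1(2) by blast
  hence Kall: "K = carrier P" using maxM[OF Ksg MK] by simp
  have dset: "derived_set P (carrier P) \<subseteq> M"
  proof
    fix c assume "c \<in> derived_set P (carrier P)"
    then obtain g k where gk: "g \<in> carrier P" "k \<in> carrier P" "c = g \<otimes> k \<otimes> inv g \<otimes> inv k" by blast
    have gC: "M #> g \<in> C" and kC: "M #> k \<in> C" using gk Kall unfolding K_def by auto
    have gQ': "M #> g \<in> carrier Q" and kQ': "M #> k \<in> carrier Q" using h.hom_closed gk by auto
    have cc: "c \<in> carrier P" using gk by simp
    have "M #> c = (M #> g) \<otimes>\<^bsub>Q\<^esub> (M #> k) \<otimes>\<^bsub>Q\<^esub> inv\<^bsub>Q\<^esub> (M #> g) \<otimes>\<^bsub>Q\<^esub> inv\<^bsub>Q\<^esub> (M #> k)"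
      using gk by simp
    also have "\<dots> = \<one>\<^bsub>Q\<^esub>"
      using Q.commutator_one_iff[OF gQ' kQ'] Ccomm[OF gC kC] by simp
    finally have "M #> c = M" unfolding Q_def by simp
    moreover have "c \<in> M #> c" using rcos_self[OF cc M(1)] .
    ultimately show "c \<in> M" by simp
  qed
  have DM: "derived P (carrier P) \<subseteq> M"
    unfolding derived_def using generate_subgroup_incl[OF dset M(1)] .
  have D2: "derived P (derived P (carrier P)) = {\<one>}"
  proof
    have "derived_set P (derived P (carrier P)) \<subseteq> {\<one>}"
    proof
      fix c assume "c \<in> derived_set P (derived P (carrier P))"
      then obtain g k where gk: "g \<in> derived P (carrier P)" "k \<in> derived P (carrier P)"
        "c = g \<otimes> k \<otimes> inv g \<otimes> inv k" by blast
      have gm: "g \<in> M" "k \<in> M" using gk DM by auto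
      have gc: "g \<in> carrier P" "k \<in> carrier P" using gm Msub by auto
      have "g \<otimes> k = k \<otimes> g" using Mcomm gm by blast
      hence "c = \<one>" using commutator_one_iff[OF gc] gk(3) by simp
      thus "c \<in> {\<one>}" by simp
    qed
    thus "derived P (derived P (carrier P)) \<subseteq> {\<one>}"
      unfolding derived_def using generate_subgroup_incl[OF _ triv_subgroup] by blast
    show "{\<one>} \<subseteq> derived P (derived P (carrier P))"
      unfolding derived_def by (auto intro: generate.one)
  qed
  have D1: "derived P (carrier P) \<noteq> {\<one>}"
  proof
    assume eq: "derived P (carrier P) = {\<one>}"
    have "a \<otimes> b \<otimes> inv a \<otimes> inv b \<in> derived_set P (carrier P)" using a(1) b(1) by blast
    hence "a \<otimes> b \<otimes> inv a \<otimes> inv b \<in> derived P (carrier P)"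
      unfolding derived_def by (rule generate.incl)
    hence "a \<otimes> b \<otimes> inv a \<otimes> inv b = \<one>" using eq by simp
    thus False using commutator_one_iff[OF a(1) b(1)] b(2) by simp
  qed
  have solv: "solvable P"
  proof -
    have "(derived P ^^ 2) (carrier P) = {\<one>}" using D2 by (simp add: numeral_2_eq_2)
    thus ?thesis using solvable_iff_trivial_derived_seq by blast
  qed
  show ?thesis
    using a(1) b(1) gen a(2) e_def solv D1 D2 unfolding derived_length_two_def by blast
qed

end
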